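(* Let $n\geq 2$ and let $\mathbb{H}^{n}\times\mathbb{R}=\{(x,t)\in\mathbb{R}^{n}\times\mathbb{R}: x=(x_1,\dots,x_n),\ x_n>0\}$ be endowed with the metric $g=\frac{1}{x_{n}^{2}}\sum_{i=1}^{n}dx_{i}^{2}+dt^{2}$. Let $0<m<\infty$ be a constant, let $f$ be a smooth function on $\mathbb{H}^{n}\times\mathbb{R}$ and let $\lambda$ be a constant such that $$Ric+\nabla^{2}f-\frac{1}{m}\,df\otimes df=\lambda g,$$ where $Ric$ is the Ricci tensor of $g$ and $\nabla^2 f$ the Hessian of $f$ with respect to $g$. Then $\lambda=-(n-1)$ and, up to an additive constant, either $$f(x,t)=\pm\sqrt{(n-1)m}\;t,$$ or $$f(x,t)=-m\ln\big(\cosh(\eta t+a)\big)\quad\text{for some constant } a\in\mathbb{R},\ \text{where } \eta=\sqrt{\tfrac{n-1}{m}}.$$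
   Context: A Riemannian manifold $(M,g)$ with a smooth function $f$ and constants $m$, $\lambda$ satisfying $Ric+\nabla^{2}f-\frac{1}{m}df\otimes df=\lambda g$ is called a (gradient) quasi-Einstein metric. *)

theory Defs
  imports "HOL-Analysis.Analysis"
begin

text \<open>Coordinate Riemannian geometry on open subsets of R^d (d = CARD('d)).
  Metric: a matrix-valued function g p.\<close>

definition pd :: "'d::finite \<Rightarrow> (real^'d \<Rightarrow> real) \<Rightarrow> real^'d \<Rightarrow> real" where
  "pd i F p = frechet_derivative F (at p) (axis i 1)"

fun iter_pd :: "'d::finite list \<Rightarrow> (real^'d \<Rightarrow> real) \<Rightarrow> real^'d \<Rightarrow> real" where
  "iter_pd [] F = F"
| "iter_pd (i # is) F = pd i (iter_pd is F)"

definition smooth_on :: "(real^'d::finite) set \<Rightarrow> (real^'d \<Rightarrow> real) \<Rightarrow> bool" where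
  "smooth_on U F \<longleftrightarrow> (\<forall>is. \<forall>p\<in>U. iter_pd is F differentiable (at p))"

definition christoffel :: "(real^'d \<Rightarrow> real^'d^'d) \<Rightarrow> 'd::finite \<Rightarrow> 'd \<Rightarrow> 'd \<Rightarrow> real^'d \<Rightarrow> real" where
  "christoffel g k i j p = (1/2) * (\<Sum>l\<in>UNIV. matrix_inv (g p) $ k $ l *
      (pd i (\<lambda>q. g q $ j $ l) p + pd j (\<lambda>q. g q $ i $ l) p - pd l (\<lambda>q. g q $ i $ j) p))"

definition ricci :: "(real^'d \<Rightarrow> real^'d^'d) \<Rightarrow> 'd::finite \<Rightarrow> 'd \<Rightarrow> real^'d \<Rightarrow> real" where
  "ricci g i j p =
     (\<Sum>k\<in>UNIV. pd k (christoffel g k i j) p - pd j (christoffel g k i k) p)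
   + (\<Sum>k\<in>UNIV. \<Sum>l\<in>UNIV. christoffel g k k l p * christoffel g l i j p
                          - christoffel g k j l p * christoffel g l i k p)"

definition hessian :: "(real^'d \<Rightarrow> real^'d^'d) \<Rightarrow> (real^'d \<Rightarrow> real) \<Rightarrow> 'd::finite \<Rightarrow> 'd \<Rightarrow> real^'d \<Rightarrow> real" where
  "hessian g F i j p = pd i (pd j F) p - (\<Sum>k\<in>UNIV. christoffel g k i j p * pd k F p)"

definition quasi_einstein :: "(real^'d \<Rightarrow> real^'d^'d) \<Rightarrow> (real^'d::finite) set \<Rightarrow> (real^'d \<Rightarrow> real) \<Rightarrow> real \<Rightarrow> real \<Rightarrow> bool" where
  "quasi_einstein g U f m lam \<longleftrightarrow>
     (\<forall>p\<in>U. \<forall>i j. ricci g i j p + hessian g f i j p - (1/m) * pd i f p * pd j f p = lam * g p $ i $ j)"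

text \<open>H^n x R: coordinate xn is the half-space coordinate x_n, coordinate tt is t.
  Metric g = (1/x_n^2) sum_i dx_i^2 + dt^2.\<close>
definition hypR_metric :: "'d::finite \<Rightarrow> 'd \<Rightarrow> real^'d \<Rightarrow> real^'d^'d" where
  "hypR_metric xn tt p = (\<chi> i j. if i = j then (if i = tt then 1 else 1 / (p $ xn)^2) else 0)"

definition hypR_domain :: "'d::finite \<Rightarrow> (real^'d) set" where
  "hypR_domain xn = {p. p $ xn > 0}"

end

theory Submission
  imports Defs
begin

lemma nth_has_derivative: "((\<lambda>q::real^'d. q $ a) has_derivative (\<lambda>h. h $ a)) (at p)"
  by (simp add: bounded_linear_imp_has_derivative bounded_linear_vec_nth)

lemma pd_eqI:
  assumes "(G has_derivative G') (at p)" "open S" "p \<in> S" "\<And>q. q \<in> S \<Longrightarrow> F q = G q"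
  shows "pd i F p = G' (axis i 1)"
proof -
  have "(F has_derivative G') (at p)"
    by (rule has_derivative_transform_within_open[OF assms(1-3)]) (use assms(4) in auto)
  thus ?thesis unfolding pd_def using frechet_derivative_at by metis
qed

lemma inv_pow2_deriv:
  assumes "p $ a \<noteq> 0"
  shows "((\<lambda>q::real^'d. 1 / (q $ a)^2) has_derivative (\<lambda>h. - 2 / (p $ a)^3 * h $ a)) (at p)"
proof -
  have "((\<lambda>q::real^'d. 1 / (q $ a)^2) has_derivative (\<lambda>h. (0 * (p$a)^2 - 1 * (of_nat 2 * h$a * (p$a)^(2-1))) / ((p$a)^2 * (p$a)^2))) (at p)"
    by (intro has_derivative_divide' has_derivative_const has_derivative_power nth_has_derivative) (use assms in simp)
  moreover have "(\<lambda>h::real^'d. (0 * (p$a)^2 - 1 * (of_nat 2 * h$a * (p$a)^(2-1))) / ((p$a)^2 * (p$a)^2)) = (\<lambda>h. - 2 / (p $ a)^3 * h $ a)"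
    using assms by (auto simp: fun_eq_iff field_simps power2_eq_square power3_eq_cube)
  ultimately show ?thesis by simp
qed

lemma inv_deriv:
  assumes "p $ a \<noteq> 0"
  shows "((\<lambda>q::real^'d. C / (q $ a)) has_derivative (\<lambda>h. - C / (p $ a)^2 * h $ a)) (at p)"
proof -
  have "((\<lambda>q::real^'d. C / (q $ a)) has_derivative (\<lambda>h. (0 * (p$a) - C * h$a) / ((p$a) * (p$a)))) (at p)"
    by (intro has_derivative_divide' has_derivative_const nth_has_derivative) (use assms in simp)
  moreover have "(\<lambda>h::real^'d. (0 * (p$a) - C * h$a) / ((p$a) * (p$a))) = (\<lambda>h. - C / (p $ a)^2 * h $ a)"
    using assms by (auto simp: fun_eq_iff field_simps power2_eq_square)
  ultimately show ?thesis by simp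
qed

lemma open_ne: "open {q::real^'d. q $ a \<noteq> 0}"
  by (rule open_Collect_neq) (auto intro: continuous_on_component continuous_on_const)

lemma matinv_unique:
  fixes A B :: "real^'n^'n"
  assumes "A ** B = mat 1" "B ** A = mat 1"
  shows "matrix_inv A = B"
proof -
  have ex: "\<exists>B'. A ** B' = mat 1 \<and> B' ** A = mat 1" using assms by blast
  from someI_ex[OF ex] have "A ** matrix_inv A = mat 1" "matrix_inv A ** A = mat 1"
    unfolding matrix_inv_def by auto
  hence "matrix_inv A = (B ** A) ** matrix_inv A" using assms by (simp add: matrix_mul_lid)
  also have "\<dots> = B" using \<open>A ** matrix_inv A = mat 1\<close> by (simp add: matrix_mul_assoc[symmetric] matrix_mul_rid)
  finally show ?thesis .
qed

lemma G1:
  assumes "p $ a \<noteq> 0"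
  shows "matrix_inv (hypR_metric a T p) = (\<chi> i j. if i = j then (if i = T then 1 else (p$a)^2) else 0)"
proof (rule matinv_unique)
  have e: "\<And>i j. (\<Sum>k\<in>UNIV. (if i = k then (if i = T then 1 else 1 / (p$a)^2) else 0) * (if k = j then (if k = T then 1 else (p$a)^2) else (0::real)))
     = (if i = j then 1 else 0)"
  proof -
    fix i j :: 'a
    have "(\<Sum>k\<in>UNIV. (if i = k then (if i = T then 1 else 1 / (p$a)^2) else 0) * (if k = j then (if k = T then 1 else (p$a)^2) else (0::real)))
       = (\<Sum>k\<in>UNIV. if k = i then (if i = T then 1 else 1 / (p$a)^2) * (if k = j then (if k = T then 1 else (p$a)^2) else (0::real)) else 0)"
      by (rule sum.cong) auto
    also have "\<dots> = (if i = j then 1 else 0)" using assms by (simp add: sum.delta)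
    finally show "?thesis i j" .
  qed
  show "hypR_metric a T p ** (\<chi> i j. if i = j then (if i = T then 1 else (p$a)^2) else 0) = mat 1"
    unfolding hypR_metric_def matrix_matrix_mult_def mat_def vec_eq_iff using e by simp
  have e2: "\<And>i j. (\<Sum>k\<in>UNIV. (if i = k then (if i = T then 1 else (p$a)^2) else 0) * (if k = j then (if k = T then 1 else 1/(p$a)^2) else (0::real)))
     = (if i = j then 1 else 0)"
  proof -
    fix i j :: 'a
    have "(\<Sum>k\<in>UNIV. (if i = k then (if i = T then 1 else (p$a)^2) else 0) * (if k = j then (if k = T then 1 else 1/(p$a)^2) else (0::real)))
       = (\<Sum>k\<in>UNIV. if k = i then (if i = T then 1 else (p$a)^2) * (if k = j then (if k = T then 1 else 1/(p$a)^2) else (0::real)) else 0)"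
      by (rule sum.cong) auto
    also have "\<dots> = (if i = j then 1 else 0)" using assms by (simp add: sum.delta)
    finally show "?thesis i j" .
  qed
  show "(\<chi> i j. if i = j then (if i = T then 1 else (p$a)^2) else 0) ** hypR_metric a T p = mat 1"
    unfolding hypR_metric_def matrix_matrix_mult_def mat_def vec_eq_iff using e2 by simp
qed

lemma G2:
  assumes "p $ a \<noteq> 0"
  shows "pd k (\<lambda>q. hypR_metric a T q $ i $ j) p = (if i = j \<and> i \<noteq> T \<and> k = a then -2/(p$a)^3 else 0)"
proof (cases "i = j \<and> i \<noteq> T")
  case True
  have "pd k (\<lambda>q. hypR_metric a T q $ i $ j) p = (\<lambda>h. - 2 / (p $ a)^3 * h $ a) (axis k 1)"
    by (rule pd_eqI[OF inv_pow2_deriv[OF assms] open_ne]) (use assms True in \<open>auto simp: hypR_metric_def\<close>)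
  then show ?thesis using True by (auto simp: axis_def)
next
  case False
  have "pd k (\<lambda>q. hypR_metric a T q $ i $ j) p = (\<lambda>h. 0) (axis k (1::real))"
    by (rule pd_eqI[OF has_derivative_const[of "if i = j then 1 else 0"] open_ne]) (use assms False in \<open>auto simp: hypR_metric_def\<close>)
  then show ?thesis using False by auto
qed

definition cc :: "'d \<Rightarrow> 'd \<Rightarrow> 'd \<Rightarrow> 'd \<Rightarrow> 'd \<Rightarrow> real" where
"cc a T k i j = (if i \<noteq> T \<and> j \<noteq> T \<and> k \<noteq> T then -((if j = k \<and> i = a then 1 else 0) + (if i = k \<and> j = a then 1 else 0) - (if i = j \<and> k = a then 1 else 0)) else 0)"

lemma G3:
  assumes "a \<noteq> T" "p $ a \<noteq> 0"
  shows "christoffel (hypR_metric a T) k i j p = cc a T k i j / p$a"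
proof -
  have "christoffel (hypR_metric a T) k i j p = 1/2 * (\<Sum>l\<in>UNIV. if l = k then (if k = T then 1 else (p$a)^2) *
      (pd i (\<lambda>q. hypR_metric a T q $ j $ l) p + pd j (\<lambda>q. hypR_metric a T q $ i $ l) p - pd l (\<lambda>q. hypR_metric a T q $ i $ j) p) else 0)"
    unfolding christoffel_def G1[OF assms(2)] by (intro arg_cong[where f="\<lambda>x. 1/2 * x"] sum.cong) auto
  also have "\<dots> = 1/2 * ((if k = T then 1 else (p$a)^2) *
      (pd i (\<lambda>q. hypR_metric a T q $ j $ k) p + pd j (\<lambda>q. hypR_metric a T q $ i $ k) p - pd k (\<lambda>q. hypR_metric a T q $ i $ j) p))"
    by (simp add: sum.delta)
  also have "\<dots> = cc a T k i j / p$a"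
    unfolding G2[OF assms(2)] cc_def using assms by (auto simp: field_simps power2_eq_square power3_eq_cube)
  finally show ?thesis .
qed

lemma G4:
  assumes "a \<noteq> T" "p $ a \<noteq> 0"
  shows "pd l (christoffel (hypR_metric a T) k i j) p = (if l = a then - cc a T k i j / (p$a)^2 else 0)"
proof -
  have "pd l (christoffel (hypR_metric a T) k i j) p = (\<lambda>h. - cc a T k i j / (p $ a)^2 * h $ a) (axis l 1)"
    by (rule pd_eqI[OF inv_deriv[OF assms(2)] open_ne]) (use assms G3 in auto)
  thus ?thesis by (auto simp: axis_def)
qed

lemma sumH: "(\<Sum>k\<in>(UNIV::'d::finite set). if k \<noteq> T then (c::real) else 0) = (real CARD('d) - 1) * c"
proof -
  have "(\<Sum>k\<in>(UNIV::'d set). if k \<noteq> T then (c::real) else 0) = (\<Sum>k\<in>UNIV - {T}. c)"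
    by (rule sum.mono_neutral_cong_right) auto
  thus ?thesis by simp
qed

lemma dd: "(\<Sum>k\<in>(UNIV::'d::finite set). \<Sum>l\<in>(UNIV::'d set). if k = x \<and> l = y then (c::real) else 0) = c"
proof -
  have "\<And>k. (\<Sum>l\<in>(UNIV::'d set). if k = x \<and> l = y then (c::real) else 0) = (if k = x then c else 0)"
  proof -
    fix k
    have "(\<Sum>l\<in>(UNIV::'d set). if k = x \<and> l = y then (c::real) else 0) = (\<Sum>l\<in>(UNIV::'d set). if l = y then (if k = x then c else 0) else 0)"
      by (rule sum.cong) auto
    thus "?thesis k" by simp
  qed
  thus ?thesis by simp
qed

lemma dH: "(\<Sum>k\<in>(UNIV::'d::finite set). \<Sum>l\<in>(UNIV::'d set). if k \<noteq> T \<and> l = k then (c::real) else 0) = (real CARD('d) - 1) * c"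
proof -
  have "\<And>k. (\<Sum>l\<in>(UNIV::'d set). if k \<noteq> T \<and> l = k then (c::real) else 0) = (if k \<noteq> T then c else 0)"
  proof -
    fix k
    have "(\<Sum>l\<in>(UNIV::'d set). if k \<noteq> T \<and> l = k then (c::real) else 0) = (\<Sum>l\<in>(UNIV::'d set). if l = k then (if k \<noteq> T then c else 0) else 0)"
      by (rule sum.cong) auto
    thus "?thesis k" by simp
  qed
  thus ?thesis using sumH by simp
qed

lemma S1: fixes a T :: "'d::finite" assumes "i \<noteq> T" shows "(\<Sum>k\<in>UNIV. cc a T k i k) = - (real CARD('d) - 1) * (if i = a then 1 else 0)"
proof -
  have "\<And>k. cc a T k i k = (if k \<noteq> T then - (if i = a then 1 else 0) else 0)" using assms by (auto simp: cc_def)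
  hence "(\<Sum>k\<in>UNIV. cc a T k i k) = (\<Sum>k\<in>UNIV. if k \<noteq> T then - (if i = a then 1 else 0) else 0)" by simp
  also have "\<dots> = - (real CARD('d) - 1) * (if i = a then 1 else 0)" by (subst sumH) simp
  finally show ?thesis .
qed

lemma S1T: "(\<Sum>k\<in>UNIV. cc a T k T k) = 0" by (simp add: cc_def)

lemma S2: fixes a T :: "'d::finite" shows "(\<Sum>k\<in>UNIV. cc a T k k l) = - (real CARD('d) - 1) * (if l = a \<and> a \<noteq> T then 1 else 0)"
proof (cases "l = T")
  case True thus ?thesis by (auto simp: cc_def)
next
  case False
  have "\<And>k. cc a T k k l = (if k \<noteq> T then - (if l = a then 1 else 0) else 0)" using False by (auto simp: cc_def)
  hence "(\<Sum>k\<in>UNIV. cc a T k k l) = (\<Sum>k\<in>UNIV. if k \<noteq> T then - (if l = a then 1 else 0) else 0)" by simp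
  also have "\<dots> = - (real CARD('d) - 1) * (if l = a then 1 else 0)" by (subst sumH) simp
  finally show ?thesis using False by auto
qed

lemma S3: fixes a T :: "'d::finite" shows "(\<Sum>k\<in>UNIV. \<Sum>l\<in>UNIV. cc a T k k l * cc a T l i j) = - (real CARD('d) - 1) * cc a T a i j"
proof -
  have "(\<Sum>k\<in>UNIV. \<Sum>l\<in>UNIV. cc a T k k l * cc a T l i j) = (\<Sum>l\<in>UNIV. \<Sum>k\<in>UNIV. cc a T k k l * cc a T l i j)"
    by (rule sum.swap)
  also have "\<dots> = (\<Sum>l\<in>UNIV. (\<Sum>k\<in>UNIV. cc a T k k l) * cc a T l i j)"
    by (simp add: sum_distrib_right)
  also have "\<dots> = (\<Sum>l\<in>UNIV. if l = a then - (real CARD('d) - 1) * (if a \<noteq> T then 1 else 0) * cc a T a i j else 0)"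
    unfolding S2 by (rule sum.cong) auto
  also have "\<dots> = - (real CARD('d) - 1) * (if a \<noteq> T then 1 else 0) * cc a T a i j"
    by simp
  also have "\<dots> = - (real CARD('d) - 1) * cc a T a i j"
    by (cases "a = T") (simp_all add: cc_def)
  finally show ?thesis .
qed

definition RR where
 "RR a T i j = - cc a T a i j + (if j = a then (\<Sum>k\<in>UNIV. cc a T k i k) else 0)
     + (\<Sum>k\<in>UNIV. \<Sum>l\<in>UNIV. cc a T k k l * cc a T l i j - cc a T k j l * cc a T l i k)"

lemma G5:
  assumes "a \<noteq> T" "p $ a \<noteq> 0"
  shows "ricci (hypR_metric a T) i j p = RR a T i j / (p$a)^2"
proof -
  have A: "(\<Sum>k\<in>UNIV. pd k (christoffel (hypR_metric a T) k i j) p - pd j (christoffel (hypR_metric a T) k i k) p)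
     = (\<Sum>k\<in>UNIV. (if k = a then - cc a T k i j / (p$a)^2 else 0)) - (\<Sum>k\<in>UNIV. (if j = a then - cc a T k i k / (p$a)^2 else 0))"
    using G4[OF assms] by (simp add: sum_subtractf)
  also have "\<dots> = (- cc a T a i j + (if j = a then (\<Sum>k\<in>UNIV. cc a T k i k) else 0)) / (p$a)^2"
    by (simp add: sum_negf sum_divide_distrib[symmetric] diff_divide_distrib add_divide_distrib)
  finally have A': "(\<Sum>k\<in>UNIV. pd k (christoffel (hypR_metric a T) k i j) p - pd j (christoffel (hypR_metric a T) k i k) p)
     = (- cc a T a i j + (if j = a then (\<Sum>k\<in>UNIV. cc a T k i k) else 0)) / (p$a)^2" .
  have B: "(\<Sum>k\<in>UNIV. \<Sum>l\<in>UNIV. christoffel (hypR_metric a T) k k l p * christoffel (hypR_metric a T) l i j p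
                          - christoffel (hypR_metric a T) k j l p * christoffel (hypR_metric a T) l i k p)
     = (\<Sum>k\<in>UNIV. \<Sum>l\<in>UNIV. cc a T k k l * cc a T l i j - cc a T k j l * cc a T l i k) / (p$a)^2"
    using G3[OF assms] by (simp add: sum_divide_distrib power2_eq_square diff_divide_distrib)
  show ?thesis unfolding ricci_def A' B RR_def by (simp add: add_divide_distrib)
qed

lemma RR_split: fixes a T :: "'d::finite" shows
  "RR a T i j = - cc a T a i j + (if j = a then (\<Sum>k\<in>UNIV. cc a T k i k) else 0)
     - (real CARD('d) - 1) * cc a T a i j - (\<Sum>k\<in>UNIV. \<Sum>l\<in>UNIV. cc a T k j l * cc a T l i k)"
  unfolding RR_def by (simp add: sum_subtractf S3 algebra_simps)

lemma RR_T: "RR a T T j = 0"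
  unfolding RR_def by (simp add: cc_def)

lemma ccT1: "cc a T T i j = 0" by (simp add: cc_def)
lemma ccT2: "cc a T k T j = 0" by (simp add: cc_def)
lemma ccT3: "cc a T k i T = 0" by (simp add: cc_def)
lemma ccH: "k \<noteq> T \<Longrightarrow> i \<noteq> T \<Longrightarrow> j \<noteq> T \<Longrightarrow> cc a T k i j = -((if j = k \<and> i = a then 1 else 0) + (if i = k \<and> j = a then 1 else 0) - (if i = j \<and> k = a then 1 else 0))"
  by (simp add: cc_def)

lemma RR_aa_summand: fixes a T :: "'d::finite" assumes "a \<noteq> T" shows "cc a T k a l * cc a T l a k = (if k \<noteq> T \<and> l = k then 1 else 0)"
proof (cases "k = T \<or> l = T")
  case True thus ?thesis using assms by (auto simp: ccT1 ccT3)
next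
  case False
  hence "cc a T k a l = - (if l = k then 1 else 0)" "cc a T l a k = - (if l = k then 1 else 0)" 
    using assms by (simp_all add: ccH)
  thus ?thesis using False by simp
qed

lemma RR_aa: fixes a T :: "'d::finite" assumes "a \<noteq> T" shows "RR a T a a = - (real CARD('d) - 2)"
proof -
  have D: "(\<Sum>k\<in>UNIV. \<Sum>l\<in>UNIV. cc a T k a l * cc a T l a k) = (real CARD('d) - 1) * 1"
    unfolding RR_aa_summand[OF assms] by (rule dH)
  have c: "cc a T a a a = -1" using assms by (simp add: ccH)
  have s: "(\<Sum>k\<in>UNIV. cc a T k a k) = - (real CARD('d) - 1)" using S1[OF assms, of a] by simp
  show ?thesis unfolding RR_split D c s by simp
qed

lemma RR_bb: fixes a T :: "'d::finite" assumes "a \<noteq> T" "b \<noteq> T" "b \<noteq> a" shows "RR a T b b = - (real CARD('d) - 2)"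
proof -
  have e: "\<And>k l. cc a T k b l * cc a T l b k = (if k = b \<and> l = a then -1 else 0) + (if k = a \<and> l = b then -1 else 0)"
  proof -
    fix k l
    show "?thesis k l"
    proof (cases "k = T \<or> l = T")
      case True thus ?thesis using assms by (auto simp: ccT1 ccT3)
    next
      case False
      hence "cc a T k b l = - (if k = b \<and> l = a then 1 else 0) + (if l = b \<and> k = a then 1 else 0)"
            "cc a T l b k = - (if l = b \<and> k = a then 1 else 0) + (if k = b \<and> l = a then 1 else 0)"
        using assms by (auto simp add: ccH)
      thus ?thesis using assms by auto
    qed
  qed
  have D: "(\<Sum>k\<in>UNIV. \<Sum>l\<in>UNIV. cc a T k b l * cc a T l b k) = -2"
    unfolding e by (simp add: sum.distrib dd)
  have c: "cc a T a b b = 1" using assms by (simp add: ccH)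
  show ?thesis unfolding RR_split D c using assms by simp
qed

lemma RR_ba: fixes a T :: "'d::finite" assumes "a \<noteq> T" "b \<noteq> T" "b \<noteq> a" shows "RR a T b a = 0"
proof -
  have e: "\<And>k l. cc a T k a l * cc a T l b k = 0"
  proof -
    fix k l
    show "?thesis k l"
    proof (cases "k = T \<or> l = T")
      case True thus ?thesis using assms by (auto simp: ccT1 ccT3)
    next
      case False
      hence "cc a T k a l = - (if l = k then 1 else 0)"
            "cc a T l b k = - (if l = b \<and> k = a then 1 else 0) + (if k = b \<and> l = a then 1 else 0)"
        using assms by (auto simp add: ccH)
      thus ?thesis using assms by auto
    qed
  qed
  have D: "(\<Sum>k\<in>UNIV. \<Sum>l\<in>UNIV. cc a T k a l * cc a T l b k) = 0"
    unfolding e by simp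
  have c: "cc a T a b a = 0" using assms by (simp add: ccH)
  have s: "(\<Sum>k\<in>UNIV. cc a T k b k) = 0" using S1[OF assms(2), of a] assms by simp
  show ?thesis unfolding RR_split D c s using assms by simp
qed

lemma RR_ab: fixes a T :: "'d::finite" assumes "a \<noteq> T" "b \<noteq> T" "b \<noteq> a" shows "RR a T a b = 0"
proof -
  have e: "\<And>k l. cc a T k b l * cc a T l a k = 0"
  proof -
    fix k l
    show "?thesis k l"
    proof (cases "k = T \<or> l = T")
      case True thus ?thesis using assms by (auto simp: ccT1 ccT3)
    next
      case False
      hence "cc a T l a k = - (if l = k then 1 else 0)"
            "cc a T k b l = - (if k = b \<and> l = a then 1 else 0) + (if l = b \<and> k = a then 1 else 0)"
        using assms by (auto simp add: ccH)
      thus ?thesis using assms by auto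
    qed
  qed
  have D: "(\<Sum>k\<in>UNIV. \<Sum>l\<in>UNIV. cc a T k b l * cc a T l a k) = 0"
    unfolding e by simp
  have c: "cc a T a a b = 0" using assms by (simp add: ccH)
  show ?thesis unfolding RR_split D c using assms by simp
qed

lemma line_deriv:
  fixes F :: "real^'d \<Rightarrow> real"
  assumes "F differentiable (at (p + s *\<^sub>R v))"
  shows "((\<lambda>s. F (p + s *\<^sub>R v)) has_real_derivative frechet_derivative F (at (p + s *\<^sub>R v)) v) (at s)"
proof -
  have d1: "((\<lambda>s. p + s *\<^sub>R v) has_derivative (\<lambda>h. h *\<^sub>R v)) (at s)"
    by (auto intro!: derivative_eq_intros)
  have d2: "(F has_derivative frechet_derivative F (at (p + s *\<^sub>R v))) (at (p + s *\<^sub>R v))"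
    using assms frechet_derivative_works by blast
  have "((\<lambda>s. F (p + s *\<^sub>R v)) has_derivative (\<lambda>h. frechet_derivative F (at (p + s *\<^sub>R v)) (h *\<^sub>R v))) (at s)"
    using diff_chain_at[OF d1 d2] by (simp add: o_def)
  moreover have "(\<lambda>h. frechet_derivative F (at (p + s *\<^sub>R v)) (h *\<^sub>R v)) = (\<lambda>h. frechet_derivative F (at (p + s *\<^sub>R v)) v * h)"
    using has_derivative_linear[OF d2] by (simp add: linear_cmul fun_eq_iff mult.commute)
  ultimately show ?thesis by (simp add: has_field_derivative_def)
qed

lemma line_pd:
  fixes F :: "real^'d \<Rightarrow> real"
  assumes "F differentiable (at (p + s *\<^sub>R axis i 1))"
  shows "((\<lambda>s. F (p + s *\<^sub>R axis i 1)) has_real_derivative pd i F (p + s *\<^sub>R axis i 1)) (at s)"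
  using line_deriv[OF assms] unfolding pd_def .

lemma line_pd0:
  fixes F :: "real^'d \<Rightarrow> real"
  assumes "F differentiable (at p)"
  shows "((\<lambda>s. F (p + s *\<^sub>R axis i 1)) has_real_derivative pd i F p) (at 0)"
  using line_pd[of F p 0 i] assms by simp

lemma arith1: "(E::real) * A + E * (- B / m) * C = E * (A - B * C / m)"
  by (simp add: algebra_simps)

lemma W_deriv:
  fixes f :: "real^'d \<Rightarrow> real"
  assumes "f differentiable (at (p + s *\<^sub>R axis i 1))" "pd j f differentiable (at (p + s *\<^sub>R axis i 1))"
  shows "((\<lambda>s. exp (- f (p + s *\<^sub>R axis i 1) / m) * pd j f (p + s *\<^sub>R axis i 1)) has_real_derivative
     exp (- f (p + s *\<^sub>R axis i 1) / m) * (pd i (pd j f) (p + s *\<^sub>R axis i 1) - pd i f (p + s *\<^sub>R axis i 1) * pd j f (p + s *\<^sub>R axis i 1) / m)) (at s)"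
proof -
  let ?q = "p + s *\<^sub>R axis i 1"
  have h1: "((\<lambda>s. f (p + s *\<^sub>R axis i 1)) has_real_derivative pd i f ?q) (at s)" by (rule line_pd[OF assms(1)])
  have h2: "((\<lambda>s. pd j f (p + s *\<^sub>R axis i 1)) has_real_derivative pd i (pd j f) ?q) (at s)" by (rule line_pd[OF assms(2)])
  have h3: "((\<lambda>s. - f (p + s *\<^sub>R axis i 1) / m) has_real_derivative - pd i f ?q / m) (at s)"
    using DERIV_cdivide[OF DERIV_minus[OF h1], of m] by simp
  have h4: "((\<lambda>s. exp (- f (p + s *\<^sub>R axis i 1) / m)) has_real_derivative exp (- f ?q / m) * (- pd i f ?q / m)) (at s)"
    by (rule DERIV_fun_exp[OF h3])
  have "((\<lambda>s. exp (- f (p + s *\<^sub>R axis i 1) / m) * pd j f (p + s *\<^sub>R axis i 1)) has_real_derivative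
     exp (- f ?q / m) * pd i (pd j f) ?q + exp (- f ?q / m) * (- pd i f ?q / m) * pd j f ?q) (at s)"
    by (rule DERIV_mult'[OF h4 h2])
  thus ?thesis unfolding arith1 .
qed

lemma u_deriv:
  fixes f :: "real^'d \<Rightarrow> real"
  assumes "f differentiable (at (p + s *\<^sub>R axis i 1))"
  shows "((\<lambda>s. exp (- f (p + s *\<^sub>R axis i 1) / m)) has_real_derivative
     - (exp (- f (p + s *\<^sub>R axis i 1) / m) * pd i f (p + s *\<^sub>R axis i 1)) / m) (at s)"
proof -
  let ?q = "p + s *\<^sub>R axis i 1"
  have h1: "((\<lambda>s. f (p + s *\<^sub>R axis i 1)) has_real_derivative pd i f ?q) (at s)" by (rule line_pd[OF assms(1)])
  have h3: "((\<lambda>s. - f (p + s *\<^sub>R axis i 1) / m) has_real_derivative - pd i f ?q / m) (at s)"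
    using DERIV_cdivide[OF DERIV_minus[OF h1], of m] by simp
  show ?thesis using DERIV_fun_exp[OF h3] by simp
qed

lemma W_deriv0:
  fixes f :: "real^'d \<Rightarrow> real"
  assumes "f differentiable (at p)" "pd j f differentiable (at p)"
  shows "((\<lambda>s. exp (- f (p + s *\<^sub>R axis i 1) / m) * pd j f (p + s *\<^sub>R axis i 1)) has_real_derivative
     exp (- f p / m) * (pd i (pd j f) p - pd i f p * pd j f p / m)) (at 0)"
  using W_deriv[of f p 0 i j m] assms by simp

lemma comp_line: "(q + s *\<^sub>R axis i 1) $ k = q $ k + (if k = i then s else (0::real))"
  by (simp add: axis_def)

lemma const_interval:
  fixes F :: "real \<Rightarrow> real"
  assumes "\<And>x. a < x \<Longrightarrow> (F has_real_derivative 0) (at x)" "a < s" "a < t"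
  shows "F s = F t"
proof -
  have gen: "F x = F y" if "a < x" "x < y" for x y
  proof -
    have "\<And>z. x \<le> z \<Longrightarrow> z \<le> y \<Longrightarrow> (F has_real_derivative (\<lambda>_. 0) z) (at z)"
      using assms(1) that by simp
    from MVT2[OF that(2) this] obtain z where "F y - F x = (y - x) * 0" by blast
    thus ?thesis by simp
  qed
  consider "s < t" | "s = t" | "t < s" by linarith
  thus ?thesis
  proof cases
    case 1 thus ?thesis using gen[of s t] assms(2) by simp
  next
    case 2 thus ?thesis by simp
  next
    case 3 thus ?thesis using gen[of t s] assms(3) by simp
  qed
qed

lemma deriv_zero_const: "(\<And>x. (F has_real_derivative 0) (at x)) \<Longrightarrow> F s = F (t::real)"
  using DERIV_isconst_all by blast

lemma no_pos_concave:
  fixes \<phi> \<phi>1 \<phi>2 :: "real \<Rightarrow> real"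
  assumes d1: "\<And>s. (\<phi> has_real_derivative \<phi>1 s) (at s)"
    and d2: "\<And>s. (\<phi>1 has_real_derivative \<phi>2 s) (at s)"
    and neg: "\<And>s. \<phi>2 s < 0" and pos: "\<And>s. \<phi> s > 0"
  shows False
proof -
  have dec: "\<phi>1 x > \<phi>1 y" if "x < y" for x y
    using DERIV_neg_imp_decreasing[OF that] d2 neg by blast
  have "\<phi>1 0 > \<phi>1 1" using dec by simp
  then obtain s1 where s1: "\<phi>1 s1 \<noteq> 0" by (metis less_irrefl)
  show False
  proof (cases "\<phi>1 s1 < 0")
    case True
    define t where "t = s1 + (\<phi> s1 + 1) / (- \<phi>1 s1)"
    have "(\<phi> s1 + 1) / (- \<phi>1 s1) > 0" using True pos[of s1] by (intro divide_pos_pos) auto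
    hence st: "s1 < t" unfolding t_def by simp
    have "\<And>z. s1 \<le> z \<Longrightarrow> z \<le> t \<Longrightarrow> (\<phi> has_real_derivative \<phi>1 z) (at z)" using d1 by simp
    from MVT2[OF st this] obtain z where z: "s1 < z" "z < t" "\<phi> t - \<phi> s1 = (t - s1) * \<phi>1 z" by blast
    have "\<phi>1 z < \<phi>1 s1" using dec z by simp
    hence "(t - s1) * \<phi>1 z < (t - s1) * \<phi>1 s1" using st by simp
    also have "(t - s1) * \<phi>1 s1 = - (\<phi> s1 + 1)" unfolding t_def using True by (simp add: field_simps)
    finally have "\<phi> t < -1" using z by simp
    thus False using pos[of t] by simp
  next
    case False
    hence F: "\<phi>1 s1 > 0" using s1 by simp
    define t where "t = s1 - (\<phi> s1 + 1) / (\<phi>1 s1)"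
    have "(\<phi> s1 + 1) / (\<phi>1 s1) > 0" using F pos[of s1] by (intro divide_pos_pos) auto
    hence st: "t < s1" unfolding t_def by simp
    have "\<And>z. t \<le> z \<Longrightarrow> z \<le> s1 \<Longrightarrow> (\<phi> has_real_derivative \<phi>1 z) (at z)" using d1 by simp
    from MVT2[OF st this] obtain z where z: "t < z" "z < s1" "\<phi> s1 - \<phi> t = (s1 - t) * \<phi>1 z" by blast
    have "\<phi>1 z > \<phi>1 s1" using dec z by simp
    hence "(s1 - t) * \<phi>1 z > (s1 - t) * \<phi>1 s1" using st by simp
    also have "(s1 - t) * \<phi>1 s1 = \<phi> s1 + 1" unfolding t_def using F by (simp add: field_simps)
    finally have "\<phi> t < -1" using z by simp
    thus False using pos[of t] by simp
  qed
qed

lemma exp_growth_const: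
  fixes P P1 :: "real \<Rightarrow> real"
  assumes "\<And>t. (P has_real_derivative c * P t) (at t)"
  shows "P t = P 0 * exp (c * t)"
proof -
  have "\<And>x. ((\<lambda>t. P t * exp (- (c * t))) has_real_derivative 0) (at x)"
  proof -
    fix x
    have "((\<lambda>t. P t * exp (- (c * t))) has_real_derivative P x * (exp (- (c * x)) * (- c)) + c * P x * exp (- (c * x))) (at x)"
      by (intro DERIV_mult' assms DERIV_fun_exp derivative_eq_intros) auto
    thus "?thesis x" by (rule DERIV_cong) (simp add: algebra_simps)
  qed
  hence "P t * exp (- (c * t)) = P 0 * exp (- (c * 0))" using DERIV_isconst_all by blast
  hence "P t * exp (- (c * t)) * exp (c * t) = P 0 * exp (c * t)" by simp
  thus ?thesis by (simp add: exp_minus field_simps)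
qed

lemma ode_pos:
  fixes u u1 :: "real \<Rightarrow> real"
  assumes eta: "0 < \<eta>"
    and d1: "\<And>t. (u has_real_derivative u1 t) (at t)"
    and d2: "\<And>t. (u1 has_real_derivative \<eta>^2 * u t) (at t)"
    and pos: "\<And>t. u t > 0"
  shows "\<exists>\<alpha> \<beta>. \<alpha> \<ge> 0 \<and> \<beta> \<ge> 0 \<and> (\<alpha> > 0 \<or> \<beta> > 0) \<and> (\<forall>t. u t = \<alpha> * exp (\<eta> * t) + \<beta> * exp (- (\<eta> * t)))"
proof -
  define P where "P t = u1 t + \<eta> * u t" for t
  define Q where "Q t = u1 t - \<eta> * u t" for t
  have dP: "(P has_real_derivative \<eta> * P t) (at t)" for t
  proof -
    have "(P has_real_derivative \<eta>^2 * u t + \<eta> * u1 t) (at t)"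
      unfolding P_def[abs_def] by (intro derivative_eq_intros) (auto intro: d1 d2)
    thus ?thesis by (rule DERIV_cong) (simp add: P_def algebra_simps power2_eq_square)
  qed
  have dQ: "(Q has_real_derivative (- \<eta>) * Q t) (at t)" for t
  proof -
    have "(Q has_real_derivative \<eta>^2 * u t - \<eta> * u1 t) (at t)"
      unfolding Q_def[abs_def] by (intro derivative_eq_intros) (auto intro: d1 d2)
    thus ?thesis by (rule DERIV_cong) (simp add: Q_def algebra_simps power2_eq_square)
  qed
  define \<alpha> where "\<alpha> = P 0 / (2 * \<eta>)"
  define \<beta> where "\<beta> = - Q 0 / (2 * \<eta>)"
  have uf: "u t = \<alpha> * exp (\<eta> * t) + \<beta> * exp (- (\<eta> * t))" for t
  proof -
    have "u t = (P t - Q t) / (2 * \<eta>)" using eta by (simp add: P_def Q_def field_simps)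
    also have "\<dots> = (P 0 * exp (\<eta> * t) - Q 0 * exp (- \<eta> * t)) / (2 * \<eta>)"
      using exp_growth_const[OF dP, of t] exp_growth_const[OF dQ, of t] by simp
    finally show ?thesis unfolding \<alpha>_def \<beta>_def by (simp add: diff_divide_distrib)
  qed
  have a0: "\<alpha> \<ge> 0"
  proof (rule ccontr)
    assume "\<not> \<alpha> \<ge> 0" hence an: "\<alpha> < 0" by simp
    show False
    proof (cases "\<beta> > 0")
      case True
      define t where "t = ln (\<beta> / (- \<alpha>)) / (2 * \<eta>)"
      have "exp (2 * \<eta> * t) = \<beta> / (- \<alpha>)" unfolding t_def using eta True an by (simp add: divide_pos_neg)
      hence e2: "exp (\<eta> * t) * exp (\<eta> * t) = \<beta> / (- \<alpha>)" by (simp add: exp_add[symmetric] algebra_simps)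
      have "u t = exp (- (\<eta> * t)) * (\<alpha> * (exp (\<eta> * t) * exp (\<eta> * t)) + \<beta>)"
        unfolding uf by (simp add: exp_minus field_simps)
      also have "\<dots> = 0" unfolding e2 using an by simp
      finally show False using pos[of t] by simp
    next
      case False
      have "u 0 < 0" unfolding uf using an False by simp
      thus False using pos[of 0] by simp
    qed
  qed
  have b0: "\<beta> \<ge> 0"
  proof (rule ccontr)
    assume "\<not> \<beta> \<ge> 0" hence bn: "\<beta> < 0" by simp
    show False
    proof (cases "\<alpha> > 0")
      case True
      define t where "t = - (ln (\<alpha> / (- \<beta>)) / (2 * \<eta>))"
      have "exp (- (2 * \<eta> * t)) = \<alpha> / (- \<beta>)" unfolding t_def using eta True bn by (simp add: divide_pos_neg)
      hence e2: "exp (- (\<eta> * t)) * exp (- (\<eta> * t)) = \<alpha> / (- \<beta>)" by (simp add: exp_add[symmetric] algebra_simps)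
      have "u t = exp (\<eta> * t) * (\<alpha> + \<beta> * (exp (- (\<eta> * t)) * exp (- (\<eta> * t))))"
        unfolding uf by (simp add: exp_minus field_simps)
      also have "\<dots> = 0" unfolding e2 using bn by simp
      finally show False using pos[of t] by simp
    next
      case False
      have "u 0 < 0" unfolding uf using bn False by simp
      thus False using pos[of 0] by simp
    qed
  qed
  have "\<alpha> > 0 \<or> \<beta> > 0"
  proof (rule ccontr)
    assume "\<not> (\<alpha> > 0 \<or> \<beta> > 0)"
    hence "\<alpha> = 0" "\<beta> = 0" using a0 b0 by auto
    thus False using pos[of 0] uf[of 0] by simp
  qed
  thus ?thesis using a0 b0 uf by blast
qed

locale QE =
  fixes a T :: "'d::finite" and f :: "real^'d \<Rightarrow> real" and m lam :: real
  assumes aT: "a \<noteq> T" and m_pos: "0 < m"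
    and smooth: "smooth_on (hypR_domain a) f"
    and qe: "quasi_einstein (hypR_metric a T) (hypR_domain a) f m lam"
    and dim: "CARD('d) \<ge> 3"
begin

abbreviation "D \<equiv> hypR_domain a"
definition "N1 = real CARD('d) - 2"

lemma inD: "q \<in> D \<longleftrightarrow> q $ a > 0" by (simp add: hypR_domain_def)

lemma diff_f: "q \<in> D \<Longrightarrow> f differentiable (at q)"
  using smooth unfolding smooth_on_def by (metis iter_pd.simps(1))

lemma diff_fj: "q \<in> D \<Longrightarrow> pd j f differentiable (at q)"
  using smooth unfolding smooth_on_def by (metis iter_pd.simps)

lemma hess_eq:
  assumes "q \<in> D"
  shows "hessian (hypR_metric a T) f i j q = pd i (pd j f) q - (\<Sum>k\<in>UNIV. cc a T k i j * pd k f q) / q$a"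
proof -
  have "q $ a \<noteq> 0" using assms inD by auto
  thus ?thesis unfolding hessian_def using G3[OF aT] by (simp add: sum_divide_distrib)
qed

lemma QE_at:
  assumes "q \<in> D"
  shows "RR a T i j / (q$a)^2 + pd i (pd j f) q - (\<Sum>k\<in>UNIV. cc a T k i j * pd k f q) / q$a - pd i f q * pd j f q / m
     = lam * hypR_metric a T q $ i $ j"
proof -
  have "q $ a \<noteq> 0" using assms inD by auto
  have "ricci (hypR_metric a T) i j q + hessian (hypR_metric a T) f i j q - (1/m) * pd i f q * pd j f q = lam * hypR_metric a T q $ i $ j"
    using qe assms unfolding quasi_einstein_def by blast
  thus ?thesis unfolding hess_eq[OF assms] G5[OF aT \<open>q $ a \<noteq> 0\<close>] by simp
qed

lemma Eq_TT:
  assumes "q \<in> D"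
  shows "pd T (pd T f) q - pd T f q * pd T f q / m = lam"
  using QE_at[OF assms, of T T] by (simp add: RR_T ccT2 hypR_metric_def)

lemma Eq_Ta:
  assumes "q \<in> D"
  shows "pd T (pd a f) q - pd T f q * pd a f q / m = 0"
  using QE_at[OF assms, of T a] aT by (simp add: RR_T ccT2 hypR_metric_def)

lemma Eq_aa:
  assumes "q \<in> D"
  shows "pd a (pd a f) q + pd a f q / q$a - pd a f q * pd a f q / m = (lam + N1) / (q$a)^2"
proof -
  have s: "(\<Sum>k\<in>UNIV. cc a T k a a * pd k f q) = (\<Sum>k\<in>UNIV. if k = a then - pd a f q else 0)"
    by (rule sum.cong) (use aT in \<open>auto simp: cc_def\<close>)
  have "q $ a \<noteq> 0" using assms inD by auto
  have e: "- N1 / (q$a)^2 + pd a (pd a f) q - (- pd a f q) / q$a - pd a f q * pd a f q / m = lam * (1 / (q$a)^2)"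
    using QE_at[OF assms, of a a] aT unfolding s RR_aa[OF aT] N1_def by (simp add: hypR_metric_def)
  have "(lam + N1) / (q$a)^2 = lam * (1 / (q$a)^2) + N1 / (q$a)^2" by (simp add: add_divide_distrib)
  moreover have "- N1 / (q$a)^2 = - (N1 / (q$a)^2)" "(- pd a f q) / q$a = - (pd a f q / q$a)" by simp_all
  ultimately show ?thesis using e by linarith
qed

lemma Eq_bb:
  assumes "q \<in> D" "b \<noteq> a" "b \<noteq> T"
  shows "pd b (pd b f) q - pd a f q / q$a - pd b f q * pd b f q / m = (lam + N1) / (q$a)^2"
proof -
  have s: "(\<Sum>k\<in>UNIV. cc a T k b b * pd k f q) = (\<Sum>k\<in>UNIV. if k = a then pd a f q else 0)"
    by (rule sum.cong) (use aT assms in \<open>auto simp: cc_def\<close>)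
  have "q $ a \<noteq> 0" using assms inD by auto
  have e: "- N1 / (q$a)^2 + pd b (pd b f) q - pd a f q / q$a - pd b f q * pd b f q / m = lam * (1 / (q$a)^2)"
    using QE_at[OF assms(1), of b b] aT assms unfolding s RR_bb[OF aT assms(3,2)] N1_def by (simp add: hypR_metric_def)
  have "(lam + N1) / (q$a)^2 = lam * (1 / (q$a)^2) + N1 / (q$a)^2" by (simp add: add_divide_distrib)
  moreover have "- N1 / (q$a)^2 = - (N1 / (q$a)^2)" by simp_all
  ultimately show ?thesis using e by linarith
qed

lemma Eq_ba:
  assumes "q \<in> D" "b \<noteq> a" "b \<noteq> T"
  shows "pd b (pd a f) q + pd b f q / q$a - pd b f q * pd a f q / m = 0"
proof -
  have s: "(\<Sum>k\<in>UNIV. cc a T k b a * pd k f q) = (\<Sum>k\<in>UNIV. if k = b then - pd b f q else 0)"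
    by (rule sum.cong) (use aT assms in \<open>auto simp: cc_def\<close>)
  have "q $ a \<noteq> 0" using assms inD by auto
  thus ?thesis using QE_at[OF assms(1), of b a] aT assms unfolding s RR_ba[OF aT assms(3,2)]
    by (simp add: hypR_metric_def field_simps)
qed

lemma Eq_ab:
  assumes "q \<in> D" "b \<noteq> a" "b \<noteq> T"
  shows "pd a (pd b f) q + pd b f q / q$a - pd a f q * pd b f q / m = 0"
proof -
  have s: "(\<Sum>k\<in>UNIV. cc a T k a b * pd k f q) = (\<Sum>k\<in>UNIV. if k = b then - pd b f q else 0)"
    by (rule sum.cong) (use aT assms in \<open>auto simp: cc_def\<close>)
  have "q $ a \<noteq> 0" using assms inD by auto
  thus ?thesis using QE_at[OF assms(1), of a b] aT assms unfolding s RR_ab[OF aT assms(3,2)]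
    by (simp add: hypR_metric_def field_simps)
qed

end

context QE begin

definition "mu = lam + N1"

lemma axis1: "axis i (1::real) $ k = (if k = i then 1 else 0)" by (simp add: axis_def)

lemma lineD: "q \<in> D \<Longrightarrow> i \<noteq> a \<Longrightarrow> q + s *\<^sub>R axis i 1 \<in> D"
  by (simp add: inD axis1)

lemma N1_pos: "N1 \<ge> 1" using dim unfolding N1_def by simp

lemma H1:
  assumes "q \<in> D"
  shows "exp (- f (q + s *\<^sub>R axis T 1) / m) * pd a f (q + s *\<^sub>R axis T 1) = exp (- f q / m) * pd a f q"
proof -
  have "\<And>x. ((\<lambda>s. exp (- f (q + s *\<^sub>R axis T 1) / m) * pd a f (q + s *\<^sub>R axis T 1)) has_real_derivative 0) (at x)"
  proof -
    fix x
    have qx: "q + x *\<^sub>R axis T 1 \<in> D" using lineD[OF assms] aT by auto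
    show "?thesis x"
      using W_deriv[of f q x T a m] diff_f[OF qx] diff_fj[OF qx] Eq_Ta[OF qx] by simp
  qed
  from deriv_zero_const[OF this, of s 0] show ?thesis by simp
qed

lemma H2:
  assumes "mu \<noteq> 0" "q \<in> D"
  shows "f (q + s *\<^sub>R axis T 1) = f q"
proof -
  define q' where "q' = q + s *\<^sub>R axis T 1"
  have q'D: "q' \<in> D" unfolding q'_def using lineD[OF assms(2)] aT by auto
  have ya: "q' $ a = q $ a" unfolding q'_def using aT by (simp add: axis1)
  define A where "A r = exp (- f (q + r *\<^sub>R axis a 1) / m) * pd a f (q + r *\<^sub>R axis a 1)" for r
  define B where "B r = exp (- f (q' + r *\<^sub>R axis a 1) / m) * pd a f (q' + r *\<^sub>R axis a 1)" for r
  have dA: "(A has_real_derivative exp (- f q / m) * (pd a (pd a f) q - pd a f q * pd a f q / m)) (at 0)"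
    unfolding A_def[abs_def] by (rule W_deriv0[OF diff_f[OF assms(2)] diff_fj[OF assms(2)]])
  have dB: "(B has_real_derivative exp (- f q' / m) * (pd a (pd a f) q' - pd a f q' * pd a f q' / m)) (at 0)"
    unfolding B_def[abs_def] by (rule W_deriv0[OF diff_f[OF q'D] diff_fj[OF q'D]])
  have eqAB: "B r = A r" if "r \<in> {r. r > - (q $ a)}" for r
  proof -
    have mem: "q + r *\<^sub>R axis a 1 \<in> D" using that by (simp add: inD axis1)
    have eqv: "q' + r *\<^sub>R axis a 1 = (q + r *\<^sub>R axis a 1) + s *\<^sub>R axis T 1"
      unfolding q'_def by (simp add: algebra_simps)
    show ?thesis unfolding A_def B_def eqv by (rule H1[OF mem])
  qed
  have "open {r::real. r > - (q $ a)}" by (simp add: open_Collect_less)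
  moreover have "0 \<in> {r::real. r > - (q $ a)}" using assms(2) by (simp add: inD)
  ultimately have dB': "(A has_real_derivative exp (- f q' / m) * (pd a (pd a f) q' - pd a f q' * pd a f q' / m)) (at 0)"
    using has_field_derivative_transform_within_open[OF dB] eqAB by metis
  have e: "exp (- f q / m) * (pd a (pd a f) q - pd a f q * pd a f q / m) = exp (- f q' / m) * (pd a (pd a f) q' - pd a f q' * pd a f q' / m)"
    using DERIV_unique[OF dA dB'] .
  have W: "exp (- f q' / m) * pd a f q' = exp (- f q / m) * pd a f q" unfolding q'_def using H1[OF assms(2)] .
  have y: "q $ a > 0" using assms(2) inD by auto
  have r1: "pd a (pd a f) q - pd a f q * pd a f q / m = mu / (q$a)^2 - pd a f q / q$a"
    using Eq_aa[OF assms(2)] unfolding mu_def by simp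
  have r2: "pd a (pd a f) q' - pd a f q' * pd a f q' / m = mu / (q$a)^2 - pd a f q' / q$a"
    using Eq_aa[OF q'D] unfolding mu_def ya by simp
  have "exp (- f q / m) * (mu / (q$a)^2) - (exp (- f q / m) * pd a f q) / q$a
      = exp (- f q' / m) * (mu / (q$a)^2) - (exp (- f q' / m) * pd a f q') / q$a"
    using e unfolding r1 r2 by (simp add: right_diff_distrib)
  hence "exp (- f q / m) * (mu / (q$a)^2) = exp (- f q' / m) * (mu / (q$a)^2)" using W by simp
  hence "exp (- f q / m) = exp (- f q' / m)" using assms(1) y by simp
  hence "f q = f q'" using m_pos by simp
  thus ?thesis unfolding q'_def by simp
qed

lemma H3:
  assumes "mu \<noteq> 0"
  shows "lam = 0"
proof -
  define q where "q = (axis a 1 :: real^'d)"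
  have qD: "q \<in> D" unfolding q_def by (simp add: inD)
  have fT0: "pd T f p = 0" if pD: "p \<in> D" for p
  proof -
    have "((\<lambda>s. f (p + s *\<^sub>R axis T 1)) has_real_derivative pd T f p) (at 0)"
      by (rule line_pd0[OF diff_f[OF pD]])
    moreover have "(\<lambda>s. f (p + s *\<^sub>R axis T 1)) = (\<lambda>s. f p)" using H2[OF assms pD] by auto
    ultimately show ?thesis using DERIV_const DERIV_unique by metis
  qed
  have "((\<lambda>s. pd T f (q + s *\<^sub>R axis T 1)) has_real_derivative pd T (pd T f) q) (at 0)"
    by (rule line_pd0[OF diff_fj[OF qD]])
  moreover have "(\<lambda>s. pd T f (q + s *\<^sub>R axis T 1)) = (\<lambda>s. 0)"
    using fT0 lineD[OF qD] aT by auto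
  ultimately have "pd T (pd T f) q = 0" using DERIV_const DERIV_unique by metis
  thus ?thesis using Eq_TT[OF qD] fT0[OF qD] by simp
qed

end

lemma arith2: "(y::real) > 0 \<Longrightarrow> (e * (N / y^2 - F / y) * y) * y + e * F * y = N * e"
  by (simp add: field_simps power2_eq_square)

context QE begin

lemma H4: "mu = 0"
proof (rule ccontr)
  assume mu0: "mu \<noteq> 0"
  have lam0: "lam = 0" by (rule H3[OF mu0])
  hence muN: "mu = N1" unfolding mu_def by simp
  define q0 where "q0 = (axis a 1 :: real^'d)"
  define P where "P s = q0 + (exp s - 1) *\<^sub>R axis a 1" for s
  have Pa: "P s $ a = exp s" for s unfolding P_def q0_def by (simp add: axis1)
  have PD: "P s \<in> D" for s using Pa by (simp add: inD)
  define h where "h r = exp (- f (q0 + r *\<^sub>R axis a 1) / m)" for r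
  define \<omega> where "\<omega> r = exp (- f (q0 + r *\<^sub>R axis a 1) / m) * pd a f (q0 + r *\<^sub>R axis a 1)" for r
  define \<phi> where "\<phi> s = h (exp s - 1)" for s
  define \<phi>1 where "\<phi>1 s = - (\<omega> (exp s - 1) * exp s) / m" for s
  define \<phi>2 where "\<phi>2 s = - (N1 / m) * \<phi> s" for s
  have hD: "(h has_real_derivative - \<omega> (exp s - 1) / m) (at (exp s - 1))" for s
    unfolding h_def[abs_def] \<omega>_def using u_deriv[of f q0 "exp s - 1" a m] diff_f[OF PD[of s]] unfolding P_def by simp
  have wD: "(\<omega> has_real_derivative exp (- f (P s) / m) * (pd a (pd a f) (P s) - pd a f (P s) * pd a f (P s) / m)) (at (exp s - 1))" for s
    unfolding \<omega>_def[abs_def] using W_deriv[of f q0 "exp s - 1" a a m] diff_f[OF PD[of s]] diff_fj[OF PD[of s]] unfolding P_def by simp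
  have d1: "(\<phi> has_real_derivative \<phi>1 s) (at s)" for s
  proof -
    have "((\<lambda>s. h (exp s - 1)) has_real_derivative (- \<omega> (exp s - 1) / m) * exp s) (at s)"
      by (rule DERIV_chain2[where g="\<lambda>s. exp s - 1", OF hD[of s]]) (auto intro!: derivative_eq_intros)
    thus ?thesis unfolding \<phi>_def[abs_def] \<phi>1_def by simp
  qed
  have d2: "(\<phi>1 has_real_derivative \<phi>2 s) (at s)" for s
  proof -
    have c: "((\<lambda>s. \<omega> (exp s - 1)) has_real_derivative exp (- f (P s) / m) * (pd a (pd a f) (P s) - pd a f (P s) * pd a f (P s) / m) * exp s) (at s)"
      by (rule DERIV_chain2[where g="\<lambda>s. exp s - 1", OF wD[of s]]) (auto intro!: derivative_eq_intros)
    have c2: "((\<lambda>s. \<omega> (exp s - 1) * exp s) has_real_derivative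
        \<omega> (exp s - 1) * exp s + (exp (- f (P s) / m) * (pd a (pd a f) (P s) - pd a f (P s) * pd a f (P s) / m) * exp s) * exp s) (at s)"
      by (rule DERIV_mult'[OF c DERIV_exp])
    have dd: "((\<lambda>s. - (\<omega> (exp s - 1) * exp s) / m) has_real_derivative
        - ((exp (- f (P s) / m) * (pd a (pd a f) (P s) - pd a f (P s) * pd a f (P s) / m) * exp s) * exp s + \<omega> (exp s - 1) * exp s) / m) (at s)"
      using DERIV_cdivide[OF DERIV_minus[OF c2], of m] by (simp add: add.commute)
    have y: "exp s > 0" by simp
    have r1: "pd a (pd a f) (P s) - pd a f (P s) * pd a f (P s) / m = N1 / (exp s)^2 - pd a f (P s) / exp s"
      using Eq_aa[OF PD[of s]] unfolding Pa lam0 by simp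
    have om: "\<omega> (exp s - 1) = exp (- f (P s) / m) * pd a f (P s)" unfolding \<omega>_def P_def by simp
    have "- ((exp (- f (P s) / m) * (pd a (pd a f) (P s) - pd a f (P s) * pd a f (P s) / m) * exp s) * exp s + \<omega> (exp s - 1) * exp s) / m
       = - ((exp (- f (P s) / m) * (N1 / (exp s)^2 - pd a f (P s) / exp s) * exp s) * exp s + exp (- f (P s) / m) * pd a f (P s) * exp s) / m"
      by (simp only: r1 om)
    also have "\<dots> = - (N1 * exp (- f (P s) / m)) / m" by (simp only: arith2[OF y])
    also have "\<dots> = \<phi>2 s" unfolding \<phi>2_def \<phi>_def h_def P_def by simp
    finally have "- ((exp (- f (P s) / m) * (pd a (pd a f) (P s) - pd a f (P s) * pd a f (P s) / m) * exp s) * exp s + \<omega> (exp s - 1) * exp s) / m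
       = \<phi>2 s" .
    with dd show ?thesis unfolding \<phi>1_def[abs_def] by simp
  qed
  have neg: "\<phi>2 s < 0" for s
    unfolding \<phi>2_def \<phi>_def h_def using N1_pos m_pos by (simp add: mult_pos_pos)
  have pos: "\<phi> s > 0" for s unfolding \<phi>_def h_def by simp
  show False by (rule no_pos_concave[OF d1 d2 neg pos])
qed

end

context QE begin

lemma lamN: "lam = - N1" using H4 unfolding mu_def by simp

lemma yW:
  assumes hj: "\<And>p. p \<in> D \<Longrightarrow> pd a (pd j f) p - pd a f p * pd j f p / m = - pd j f p / p$a"
    and qD: "q \<in> D" and r: "r > - q$a"
  shows "(q$a + r) * (exp (- f (q + r *\<^sub>R axis a 1) / m) * pd j f (q + r *\<^sub>R axis a 1)) = q$a * (exp (- f q / m) * pd j f q)"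
proof -
  define F where "F x = (q$a + x) * (exp (- f (q + x *\<^sub>R axis a 1) / m) * pd j f (q + x *\<^sub>R axis a 1))" for x
  have "(F has_real_derivative 0) (at x)" if x: "- q$a < x" for x
  proof -
    let ?p = "q + x *\<^sub>R axis a 1"
    have pD: "?p \<in> D" using x by (simp add: inD axis1)
    have pa: "?p $ a = q$a + x" by (simp add: axis1)
    have d: "((\<lambda>x. exp (- f (q + x *\<^sub>R axis a 1) / m) * pd j f (q + x *\<^sub>R axis a 1)) has_real_derivative
       exp (- f ?p / m) * (pd a (pd j f) ?p - pd a f ?p * pd j f ?p / m)) (at x)"
      by (rule W_deriv[OF diff_f[OF pD] diff_fj[OF pD]])
    have d1: "((\<lambda>x. q$a + x) has_real_derivative 1) (at x)" by (auto intro!: derivative_eq_intros)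
    have "(F has_real_derivative (q$a + x) * (exp (- f ?p / m) * (pd a (pd j f) ?p - pd a f ?p * pd j f ?p / m))
        + 1 * (exp (- f ?p / m) * pd j f ?p)) (at x)"
      unfolding F_def[abs_def] by (rule DERIV_mult'[OF d1 d])
    moreover have "(q$a + x) * (exp (- f ?p / m) * (pd a (pd j f) ?p - pd a f ?p * pd j f ?p / m))
        + 1 * (exp (- f ?p / m) * pd j f ?p) = 0"
      unfolding hj[OF pD] pa using x by (simp add: field_simps)
    ultimately show ?thesis by simp
  qed
  hence "F r = F 0" using const_interval[of "- q$a" F r 0] r qD by (simp add: inD)
  thus ?thesis unfolding F_def by simp
qed

lemma hja: "p \<in> D \<Longrightarrow> pd a (pd a f) p - pd a f p * pd a f p / m = - pd a f p / p$a"
  using Eq_aa[of p] lamN by (simp add: algebra_simps)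

lemma hjb: "p \<in> D \<Longrightarrow> b \<noteq> a \<Longrightarrow> b \<noteq> T \<Longrightarrow> pd a (pd b f) p - pd a f p * pd b f p / m = - pd b f p / p$a"
  using Eq_ab[of p b] by (simp add: algebra_simps)

lemma J2:
  assumes qD: "q \<in> D" and b: "b \<noteq> a" "b \<noteq> T"
  shows "exp (- f q / m) * pd a f q = exp (- f (q + (1 - q$a) *\<^sub>R axis a 1) / m) * pd a f (q + (1 - q$a) *\<^sub>R axis a 1)"
proof -
  define y where "y = q$a"
  have y: "y > 0" using qD inD y_def by simp
  define q1 where "q1 = q + (1 - q$a) *\<^sub>R axis a 1"
  have q1D: "q1 \<in> D" unfolding q1_def by (simp add: inD axis1)
  have q1a: "q1 $ a = 1" unfolding q1_def by (simp add: axis1)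
  have eqf: "(\<lambda>r. exp (- f (q1 + r *\<^sub>R axis b 1) / m) * pd b f (q1 + r *\<^sub>R axis b 1))
      = (\<lambda>r. y * (exp (- f (q + r *\<^sub>R axis b 1) / m) * pd b f (q + r *\<^sub>R axis b 1)))"
  proof
    fix r
    have pD: "q + r *\<^sub>R axis b 1 \<in> D" using lineD[OF qD b(1)] .
    have pa: "(q + r *\<^sub>R axis b 1) $ a = y" using b unfolding y_def by (simp add: axis1)
    have e: "q + r *\<^sub>R axis b 1 + (1 - y) *\<^sub>R axis a 1 = q1 + r *\<^sub>R axis b 1"
      unfolding q1_def y_def by (simp add: algebra_simps)
    have "(y + (1 - y)) * (exp (- f (q + r *\<^sub>R axis b 1 + (1 - y) *\<^sub>R axis a 1) / m) * pd b f (q + r *\<^sub>R axis b 1 + (1 - y) *\<^sub>R axis a 1))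
       = y * (exp (- f (q + r *\<^sub>R axis b 1) / m) * pd b f (q + r *\<^sub>R axis b 1))"
      using yW[where j=b and q="q + r *\<^sub>R axis b 1" and r="1-y", OF hjb[OF _ b] pD] pa y by simp
    thus "exp (- f (q1 + r *\<^sub>R axis b 1) / m) * pd b f (q1 + r *\<^sub>R axis b 1) = y * (exp (- f (q + r *\<^sub>R axis b 1) / m) * pd b f (q + r *\<^sub>R axis b 1))"
      unfolding e by simp
  qed
  have dl: "((\<lambda>r. exp (- f (q1 + r *\<^sub>R axis b 1) / m) * pd b f (q1 + r *\<^sub>R axis b 1)) has_real_derivative
      exp (- f q1 / m) * (pd b (pd b f) q1 - pd b f q1 * pd b f q1 / m)) (at 0)"
    by (rule W_deriv0[OF diff_f[OF q1D] diff_fj[OF q1D]])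
  have dr0: "((\<lambda>r. exp (- f (q + r *\<^sub>R axis b 1) / m) * pd b f (q + r *\<^sub>R axis b 1)) has_real_derivative
      exp (- f q / m) * (pd b (pd b f) q - pd b f q * pd b f q / m)) (at 0)"
    by (rule W_deriv0[OF diff_f[OF qD] diff_fj[OF qD]])
  have dr: "((\<lambda>r. y * (exp (- f (q + r *\<^sub>R axis b 1) / m) * pd b f (q + r *\<^sub>R axis b 1))) has_real_derivative
      y * (exp (- f q / m) * (pd b (pd b f) q - pd b f q * pd b f q / m))) (at 0)"
    by (rule DERIV_cmult[OF dr0])
  have eq: "exp (- f q1 / m) * (pd b (pd b f) q1 - pd b f q1 * pd b f q1 / m) = y * (exp (- f q / m) * (pd b (pd b f) q - pd b f q * pd b f q / m))"
    using DERIV_unique[OF dl[unfolded eqf] dr] .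
  have b1: "pd b (pd b f) p - pd b f p * pd b f p / m = pd a f p / p$a" if "p \<in> D" for p
    using Eq_bb[OF that b] lamN by (simp add: algebra_simps)
  have "exp (- f q1 / m) * pd a f q1 = y * (exp (- f q / m) * (pd a f q / y))"
    using eq unfolding b1[OF q1D] b1[OF qD] q1a y_def by simp
  thus ?thesis using y unfolding q1_def by simp
qed

lemma J3:
  assumes qD: "q \<in> D"
  shows "pd a f q = 0"
proof -
  obtain b where b: "b \<noteq> a" "b \<noteq> T"
  proof -
    have "\<not> (UNIV \<subseteq> {a, T})"
    proof
      assume "UNIV \<subseteq> {a, T}"
      hence "CARD('d) \<le> card {a, T}" by (simp add: card_mono)
      also have "\<dots> \<le> 2" by (simp add: card_insert_le_m1)
      finally show False using dim by simp
    qed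
    thus ?thesis using that by blast
  qed
  define W where "W p = exp (- f p / m) * pd a f p" for p
  define y where "y = q$a"
  have y: "y > 0" using qD inD y_def by simp
  define q1 where "q1 = q + (1 - y) *\<^sub>R axis a 1"
  define q2 where "q2 = q + (2 - y) *\<^sub>R axis a 1"
  have q2D: "q2 \<in> D" unfolding q2_def y_def by (simp add: inD axis1)
  have q2a: "q2 $ a = 2" unfolding q2_def y_def by (simp add: axis1)
  have e1: "q2 + (1 - q2 $ a) *\<^sub>R axis a 1 = q1" unfolding q2a q1_def q2_def y_def by (simp add: vec_eq_iff axis1 algebra_simps)
  have e2: "q2 + (-1) *\<^sub>R axis a 1 = q1" unfolding q1_def q2_def by (simp add: vec_eq_iff axis1 algebra_simps)
  have A: "W q2 = W q1" using J2[OF q2D b] unfolding e1 W_def .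
  have B: "(2 + (-1)) * W q1 = 2 * W q2" using yW[OF hja q2D, of "-1"] unfolding q2a e2 W_def by simp
  have W1: "W q1 = 0" using A B by simp
  have "W q = W q1" using J2[OF qD b] unfolding W_def q1_def y_def .
  hence "W q = 0" using W1 by simp
  thus ?thesis unfolding W_def by simp
qed

lemma J4:
  assumes qD: "q \<in> D" and b: "b \<noteq> a" "b \<noteq> T"
  shows "pd b f q = 0"
proof -
  have "((\<lambda>s. pd a f (q + s *\<^sub>R axis b 1)) has_real_derivative pd b (pd a f) q) (at 0)"
    by (rule line_pd0[OF diff_fj[OF qD]])
  moreover have "(\<lambda>s. pd a f (q + s *\<^sub>R axis b 1)) = (\<lambda>s. 0)"
    using J3 lineD[OF qD b(1)] by auto
  ultimately have "pd b (pd a f) q = 0" using DERIV_const DERIV_unique by metis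
  moreover have "q $ a > 0" using qD inD by simp
  ultimately show ?thesis using Eq_ba[OF qD b] J3[OF qD] by simp
qed

lemma J5: "q \<in> D \<Longrightarrow> i \<noteq> T \<Longrightarrow> pd i f q = 0"
  using J3 J4 by (cases "i = a") auto

end

lemma lin_expand:
  fixes F' :: "real^'d \<Rightarrow> real"
  assumes lin: "linear F'"
  shows "F' v = (\<Sum>i\<in>UNIV. v $ i * F' (axis i 1))"
proof -
  have "F' v = F' (\<Sum>i\<in>UNIV. v $ i *\<^sub>R axis i 1)"
    using basis_expansion[of v] by (simp add: scalar_mult_eq_scaleR)
  also have "\<dots> = (\<Sum>i\<in>UNIV. F' (v $ i *\<^sub>R axis i 1))" using linear_sum[OF lin] by simp
  also have "\<dots> = (\<Sum>i\<in>UNIV. v $ i * F' (axis i 1))" using linear_cmul[OF lin] by simp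
  finally show ?thesis .
qed

lemma arith3: "(sa::real) > 0 \<Longrightarrow> sb > 0 \<Longrightarrow> sa * sb * (E * sa / sb + F * sb / sa) = (sa * sa) * E + (sb * sb) * F"
  by (simp add: field_simps)

lemma cosh_id:
  fixes \<alpha> \<beta> x :: real
  assumes "\<alpha> > 0" "\<beta> > 0"
  shows "\<alpha> * exp x + \<beta> * exp (- x) = 2 * sqrt \<alpha> * sqrt \<beta> * cosh (x + (ln (sqrt \<alpha>) - ln (sqrt \<beta>)))"
proof -
  have sa: "sqrt \<alpha> > 0" "sqrt \<beta> > 0" using assms by auto
  have e1: "exp (x + (ln (sqrt \<alpha>) - ln (sqrt \<beta>))) = exp x * sqrt \<alpha> / sqrt \<beta>"
    using sa by (simp add: exp_add exp_diff)
  have e2: "exp (- (x + (ln (sqrt \<alpha>) - ln (sqrt \<beta>)))) = exp (- x) * sqrt \<beta> / sqrt \<alpha>"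
    using sa by (simp add: exp_add exp_diff exp_minus field_simps)
  have "2 * sqrt \<alpha> * sqrt \<beta> * cosh (x + (ln (sqrt \<alpha>) - ln (sqrt \<beta>)))
     = sqrt \<alpha> * sqrt \<beta> * (exp x * sqrt \<alpha> / sqrt \<beta> + exp (- x) * sqrt \<beta> / sqrt \<alpha>)"
    unfolding cosh_def e1 e2 by simp
  also have "\<dots> = (sqrt \<alpha> * sqrt \<alpha>) * exp x + (sqrt \<beta> * sqrt \<beta>) * exp (- x)"
    by (rule arith3[OF sa])
  also have "\<dots> = \<alpha> * exp x + \<beta> * exp (- x)" using assms by simp
  finally show ?thesis by simp
qed

context QE begin

lemma K2:
  assumes qD: "q \<in> D" and q'D: "q' \<in> D" and tt: "q $ T = q' $ T"
  shows "f q = f q'"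
proof -
  define v where "v = q' - q"
  define L where "L s = f (q + s *\<^sub>R v)" for s
  have inseg: "q + s *\<^sub>R v \<in> D" if "0 \<le> s" "s \<le> 1" for s
  proof -
    have "(q + s *\<^sub>R v) $ a = (1 - s) * q $ a + s * q' $ a" unfolding v_def by (simp add: algebra_simps)
    moreover have "(1 - s) * q $ a + s * q' $ a > 0"
    proof (cases "s = 0")
      case True thus ?thesis using qD inD by simp
    next
      case False
      hence "s * q' $ a > 0" using that q'D inD by simp
      moreover have "(1 - s) * q $ a \<ge> 0" using that qD inD by simp
      ultimately show ?thesis by simp
    qed
    ultimately show ?thesis by (simp add: inD)
  qed
  have d: "(L has_real_derivative 0) (at s)" if "0 \<le> s" "s \<le> 1" for s
  proof -
    let ?x = "q + s *\<^sub>R v"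
    have xD: "?x \<in> D" using inseg[OF that] .
    have "(L has_real_derivative frechet_derivative f (at ?x) v) (at s)"
      unfolding L_def[abs_def] by (rule line_deriv[OF diff_f[OF xD]])
    moreover have "frechet_derivative f (at ?x) v = 0"
    proof -
      have lin: "linear (frechet_derivative f (at ?x))"
        using diff_f[OF xD] frechet_derivative_works has_derivative_linear by blast
      have "frechet_derivative f (at ?x) v = (\<Sum>i\<in>UNIV. v $ i * pd i f ?x)"
        unfolding pd_def by (rule lin_expand[OF lin])
      also have "\<dots> = 0"
      proof (rule sum.neutral, rule ballI)
        fix i assume "i \<in> (UNIV::'d set)"
        show "v $ i * pd i f ?x = 0"
        proof (cases "i = T")
          case True thus ?thesis using tt unfolding v_def by simp
        next
          case False thus ?thesis using J5[OF xD] by simp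
        qed
      qed
      finally show ?thesis .
    qed
    ultimately show ?thesis by simp
  qed
  have "\<And>z. 0 \<le> z \<Longrightarrow> z \<le> 1 \<Longrightarrow> (L has_real_derivative (\<lambda>_. 0) z) (at z)" using d by simp
  from MVT2[OF zero_less_one this] have "L 1 = L 0" by auto
  thus ?thesis unfolding L_def v_def by simp
qed

definition "Pt t = axis a 1 + t *\<^sub>R axis T (1::real)"

lemma PtD: "Pt t \<in> D" unfolding Pt_def using aT by (simp add: inD axis1)
lemma PtT: "Pt t $ T = t" unfolding Pt_def using aT by (simp add: axis1)

lemma fPt: "q \<in> D \<Longrightarrow> f q = f (Pt (q $ T))"
  by (rule K2) (simp_all add: PtD PtT)

lemma final:
  "lam = - N1 \<and>
    (\<exists>c. (\<forall>p\<in>D. f p = sqrt (N1 * m) * p $ T + c)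
       \<or> (\<forall>p\<in>D. f p = - sqrt (N1 * m) * p $ T + c)
       \<or> (\<exists>A. \<forall>p\<in>D. f p = - m * ln (cosh (sqrt (N1 / m) * p $ T + A)) + c))"
proof -
  define \<eta> where "\<eta> = sqrt (N1 / m)"
  have N1p: "N1 > 0" using N1_pos by simp
  have eta: "\<eta> > 0" unfolding \<eta>_def using N1p m_pos by simp
  have eta2: "\<eta>^2 = N1 / m" unfolding \<eta>_def using N1p m_pos by simp
  define u where "u t = exp (- f (Pt t) / m)" for t
  define u1 where "u1 t = - (exp (- f (Pt t) / m) * pd T f (Pt t)) / m" for t
  have d1: "(u has_real_derivative u1 t) (at t)" for t
    unfolding u_def[abs_def] u1_def Pt_def using u_deriv[of f "axis a 1" t T m] diff_f[OF PtD[of t]] unfolding Pt_def by simp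
  have d2: "(u1 has_real_derivative \<eta>^2 * u t) (at t)" for t
  proof -
    have w: "((\<lambda>t. exp (- f (Pt t) / m) * pd T f (Pt t)) has_real_derivative
       exp (- f (Pt t) / m) * (pd T (pd T f) (Pt t) - pd T f (Pt t) * pd T f (Pt t) / m)) (at t)"
      using W_deriv[of f "axis a 1" t T T m] diff_f[OF PtD[of t]] diff_fj[OF PtD[of t]] unfolding Pt_def by simp
    have "(u1 has_real_derivative - (exp (- f (Pt t) / m) * (pd T (pd T f) (Pt t) - pd T f (Pt t) * pd T f (Pt t) / m)) / m) (at t)"
      unfolding u1_def[abs_def] using DERIV_cdivide[OF DERIV_minus[OF w], of m] by simp
    moreover have "- (exp (- f (Pt t) / m) * (pd T (pd T f) (Pt t) - pd T f (Pt t) * pd T f (Pt t) / m)) / m = \<eta>^2 * u t"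
      unfolding Eq_TT[OF PtD] lamN eta2 u_def by simp
    ultimately show ?thesis by simp
  qed
  have pos: "u t > 0" for t unfolding u_def by simp
  obtain \<alpha> \<beta> where ab: "\<alpha> \<ge> 0" "\<beta> \<ge> 0" "\<alpha> > 0 \<or> \<beta> > 0" and uf: "\<And>t. u t = \<alpha> * exp (\<eta> * t) + \<beta> * exp (- (\<eta> * t))"
    using ode_pos[OF eta d1 d2 pos] by blast
  have fu: "f p = - m * ln (u (p $ T))" if "p \<in> D" for p
    unfolding fPt[OF that] u_def using m_pos by simp
  have meta: "m * \<eta> = sqrt (N1 * m)"
  proof -
    have "sqrt (N1 * m) = sqrt ((N1 / m) * m^2)" using m_pos by (simp add: power2_eq_square)
    also have "\<dots> = \<eta> * m" unfolding \<eta>_def real_sqrt_mult using m_pos by simp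
    finally show ?thesis by simp
  qed
  have "\<exists>c. (\<forall>p\<in>D. f p = sqrt (N1 * m) * p $ T + c)
       \<or> (\<forall>p\<in>D. f p = - sqrt (N1 * m) * p $ T + c)
       \<or> (\<exists>A. \<forall>p\<in>D. f p = - m * ln (cosh (sqrt (N1 / m) * p $ T + A)) + c)"
  proof (cases "\<alpha> > 0 \<and> \<beta> > 0")
    case True
    define A where "A = ln (sqrt \<alpha>) - ln (sqrt \<beta>)"
    define c where "c = - m * ln (2 * sqrt \<alpha> * sqrt \<beta>)"
    have "\<forall>p\<in>D. f p = - m * ln (cosh (sqrt (N1 / m) * p $ T + A)) + c"
    proof
      fix p assume pD: "p \<in> D"
      have "u (p $ T) = 2 * sqrt \<alpha> * sqrt \<beta> * cosh (\<eta> * p $ T + A)"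
        unfolding uf A_def using cosh_id True by blast
      moreover have "2 * sqrt \<alpha> * sqrt \<beta> > 0" using True by simp
      ultimately have "ln (u (p $ T)) = ln (2 * sqrt \<alpha> * sqrt \<beta>) + ln (cosh (\<eta> * p $ T + A))"
        using ln_mult[of "2 * sqrt \<alpha> * sqrt \<beta>" "cosh (\<eta> * p $ T + A)"] True by simp
      thus "f p = - m * ln (cosh (sqrt (N1 / m) * p $ T + A)) + c"
        unfolding fu[OF pD] c_def \<eta>_def by (simp add: algebra_simps)
    qed
    thus ?thesis by blast
  next
    case False
    show ?thesis
    proof (cases "\<beta> = 0")
      case True
      hence ap: "\<alpha> > 0" using ab by simp
      have "\<forall>p\<in>D. f p = - sqrt (N1 * m) * p $ T + (- m * ln \<alpha>)"
      proof
        fix p assume pD: "p \<in> D"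
        have h: "ln (u (p $ T)) = ln \<alpha> + \<eta> * p $ T" unfolding uf True using ap by (simp add: ln_mult)
        show "f p = - sqrt (N1 * m) * p $ T + (- m * ln \<alpha>)"
          unfolding fu[OF pD] h meta[symmetric] by (simp add: algebra_simps)
      qed
      thus ?thesis by blast
    next
      case bF: False
      hence bp: "\<beta> > 0" and a0: "\<alpha> = 0" using ab False by auto
      have "\<forall>p\<in>D. f p = sqrt (N1 * m) * p $ T + (- m * ln \<beta>)"
      proof
        fix p assume pD: "p \<in> D"
        have h: "ln (u (p $ T)) = ln \<beta> - \<eta> * p $ T" unfolding uf a0 using bp by (simp add: ln_mult)
        show "f p = sqrt (N1 * m) * p $ T + (- m * ln \<beta>)"
          unfolding fu[OF pD] h meta[symmetric] by (simp add: algebra_simps)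
      qed
      thus ?thesis by blast
    qed
  qed
  thus ?thesis using lamN by blast
qed

end

theorem theorem1:
  fixes xn tt :: "'d::finite"
    and f :: "real^'d \<Rightarrow> real"
    and m lam :: real
  defines "n \<equiv> real (CARD('d)) - 1"
  assumes dim: "CARD('d) \<ge> 3"
    and coords: "xn \<noteq> tt"
    and m_pos: "0 < m"
    and smooth: "smooth_on (hypR_domain xn) f"
    and qe: "quasi_einstein (hypR_metric xn tt) (hypR_domain xn) f m lam"
  shows "lam = - (n - 1) \<and>
    (\<exists>c. (\<forall>p\<in>hypR_domain xn. f p = sqrt ((n - 1) * m) * p $ tt + c)
       \<or> (\<forall>p\<in>hypR_domain xn. f p = - sqrt ((n - 1) * m) * p $ tt + c)
       \<or> (\<exists>a. \<forall>p\<in>hypR_domain xn.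
              f p = - m * ln (cosh (sqrt ((n - 1) / m) * p $ tt + a)) + c))"
  proof -
  interpret QE xn tt f m lam
    using coords m_pos smooth qe dim by unfold_locales auto
  have nN: "n - 1 = N1" unfolding n_def N1_def by simp
  show ?thesis unfolding nN using final .
qed

end
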